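(* Let $f:\mathbb{R}^d\to\mathbb{R}$ be differentiable, bounded from below with infimum $f^{\mathrm{inf}}=\inf_x f(x)\in\mathbb{R}$, and with $L$-Lipschitz gradient. For each $x\in\mathbb{R}^d$ let $g(x)$ be a random vector in $\mathbb{R}^d$ with $\mathbb{E}[g(x)]=\nabla f(x)$. Then: (1) If (M-SG) holds for some $\alpha\ge 0$, then (E-SG) holds for some $\alpha\ge 0$. (2) If (E-SG) holds for some $\alpha$, then (RG) holds for some $\alpha,\beta\ge 0$. (3) If (BV) holds for some $\sigma\ge 0$, then (RG) holds for some $\alpha,\beta\ge 0$. (4) If $f=\frac1n\sum_{i=1}^n f_i$ with each $f_i$ differentiable, $g(x)=\nabla f_i(x)$ with $i$ drawn uniformly from $\{1,\dots,n\}$, and (GC) holds for some $\eta>0$, then (RG) holds for some $\alpha,\beta\ge0$. (5) If (RG) holds for some $\alpha,\beta\ge 0$, then (ES) holds for some $A,B,C\ge 0$. (6) If $f(x)=\mathbb{E}_{\xi\sim\mathcal{D}}[f_\xi(x)]$ for a family of differentiable functions $f_\xi$, $g(x)=\nabla f_\xi(x)$ with $\xi\sim\mathcal{D}$, and (SS) holds, then (ES) holds for some $A,B,C\ge 0$.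
   Context: Conditions on the stochastic gradient (each required for all $x,y\in\mathbb{R}^d$): (M-SG): $\|g(x)\|^2\le \alpha\|\nabla f(x)\|^2$ almost surely. (E-SG): $\mathbb{E}\|g(x)\|^2\le \alpha\|\nabla f(x)\|^2$. (RG): $\mathbb{E}\|g(x)\|^2\le \alpha\|\nabla f(x)\|^2+\beta$. (BV): $\mathbb{E}\|g(x)-\nabla f(x)\|^2\le\sigma^2$. (GC): $\langle\nabla f_i(x),\nabla f_j(x)\rangle\ge -\eta$ for all $i\neq j$. (SS): almost surely in $\xi$, $\|\nabla f_\xi(x)-\nabla f_\xi(y)\|\le L\|x-y\|$ and $f_\xi(x)\ge 0$. (ES): $\mathbb{E}\|g(x)\|^2\le 2A\,(f(x)-f^{\mathrm{inf}})+B\|\nabla f(x)\|^2+C$. Norms are Euclidean. *)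

theory Defs
  imports "HOL-Probability.Probability"
begin

end

theory Submission
  imports Defs
begin



lemma descent:
  fixes h :: "'a::real_inner \<Rightarrow> real"
  assumes gr: "\<And>x. GDERIV h x :> G x"
    and lp: "\<And>x y. norm (G x - G y) \<le> K * norm (x - y)"
  shows "h y \<le> h x + G x \<bullet> (y - x) + K / 2 * norm (y - x) ^ 2"
proof -
  define v where "v = y - x"
  define \<phi> where "\<phi> t = h (x + t *\<^sub>R v) - t * (G x \<bullet> v) - K * t^2 / 2 * norm v ^ 2" for t :: real
  have d: "DERIV \<phi> t :> G (x + t *\<^sub>R v) \<bullet> v - G x \<bullet> v - K * t * norm v ^ 2" for t
  proof -
    have h1: "((\<lambda>t. h (x + t *\<^sub>R v)) has_derivative (\<lambda>s. (s *\<^sub>R v) \<bullet> G (x + t *\<^sub>R v))) (at t)"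
    proof -
      have a: "((\<lambda>t. x + t *\<^sub>R v) has_derivative (\<lambda>s. s *\<^sub>R v)) (at t)"
        by (auto intro!: derivative_eq_intros)
      show ?thesis
        using has_derivative_compose[OF a gr[of "x + t *\<^sub>R v", unfolded gderiv_def]] by simp
    qed
    hence "DERIV (\<lambda>t. h (x + t *\<^sub>R v)) t :> G (x + t *\<^sub>R v) \<bullet> v"
    proof -
      have e: "(\<lambda>s. (s *\<^sub>R v) \<bullet> G (x + t *\<^sub>R v)) = (*) (G (x + t *\<^sub>R v) \<bullet> v)"
        by (auto simp: fun_eq_iff inner_commute)
      show ?thesis using h1 unfolding has_field_derivative_def e .
    qed
    then show ?thesis unfolding \<phi>_def
      by (auto intro!: derivative_eq_intros)
  qed
  have "\<phi> 1 \<le> \<phi> 0"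
  proof (rule DERIV_nonpos_imp_nonincreasing[of 0 1])
    fix t :: real assume t: "0 \<le> t" "t \<le> 1"
    have "G (x + t *\<^sub>R v) \<bullet> v - G x \<bullet> v = (G (x + t *\<^sub>R v) - G x) \<bullet> v"
      by (simp add: inner_diff_left)
    also have "\<dots> \<le> norm (G (x + t *\<^sub>R v) - G x) * norm v"
      by (rule norm_cauchy_schwarz)
    also have "\<dots> \<le> K * norm (t *\<^sub>R v) * norm v"
      using lp[of "x + t *\<^sub>R v" x] by (simp add: mult_right_mono)
    also have "\<dots> = K * t * norm v ^ 2" using t by (simp add: power2_eq_square)
    finally show "\<exists>y. DERIV \<phi> t :> y \<and> y \<le> 0" using d by force
  qed auto
  then show ?thesis unfolding \<phi>_def v_def by simp
qed

lemma grad_bound: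
  fixes h :: "'a::real_inner \<Rightarrow> real"
  assumes gr: "\<And>x. GDERIV h x :> G x"
    and lp: "\<And>x y. norm (G x - G y) \<le> K * norm (x - y)"
    and nn: "\<And>x. h x \<ge> 0" and K: "K > 0"
  shows "norm (G x) ^ 2 \<le> 2 * K * h x"
proof -
  have "0 \<le> h (x - (1/K) *\<^sub>R G x)" by (rule nn)
  also have "\<dots> \<le> h x + G x \<bullet> (x - (1/K) *\<^sub>R G x - x) + K / 2 * norm (x - (1/K) *\<^sub>R G x - x) ^ 2"
    by (rule descent[OF gr lp])
  also have "\<dots> = h x - norm (G x)^2 / (2*K)"
  proof -
    have "G x \<bullet> G x = norm (G x)^2" by (simp add: power2_norm_eq_inner)
    then show ?thesis using K by (simp add: power2_eq_square field_simps)
  qed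
  finally show ?thesis using K by (simp add: field_simps)
qed


lemma part1:
  assumes M: "prob_space M" and ae: "AE w in M. u w \<le> c" and c: "c \<ge> 0"
  shows "(\<integral>\<^sup>+ w. ennreal (u w) \<partial>M) \<le> ennreal c"
proof -
  have "(\<integral>\<^sup>+ w. ennreal (u w) \<partial>M) \<le> (\<integral>\<^sup>+ w. ennreal c \<partial>M)"
    by (rule nn_integral_mono_AE) (use ae in \<open>auto simp: ennreal_leI\<close>)
  also have "\<dots> = ennreal c" using M by (simp add: prob_space.emeasure_space_1)
  finally show ?thesis .
qed

lemma ennr_aux: "(X::real) \<ge> 0 \<Longrightarrow> Y \<ge> 0 \<Longrightarrow> 2 * ennreal X + ennreal Y = ennreal (2*X+Y)"
  by (simp add: ennreal_plus ennreal_mult)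

lemma part3:
  fixes g :: "'w \<Rightarrow> 'a::euclidean_space"
  assumes M: "prob_space M" and gm: "g \<in> borel_measurable M"
    and bv: "(\<integral>\<^sup>+ w. ennreal (norm (g w - a) ^ 2) \<partial>M) \<le> ennreal s"
    and s: "s \<ge> 0"
  shows "(\<integral>\<^sup>+ w. ennreal (norm (g w) ^ 2) \<partial>M) \<le> ennreal (2 * norm a ^ 2 + 2 * s)"
proof -
  have pw: "norm (g w) ^ 2 \<le> 2 * norm (g w - a) ^ 2 + 2 * norm a ^ 2" for w
  proof -
    have "norm (g w) \<le> norm (g w - a) + norm a" using norm_triangle_ineq[of "g w - a" a] by simp
    hence "norm (g w) ^ 2 \<le> (norm (g w - a) + norm a) ^ 2" by (simp add: power_mono)
    also have "\<dots> \<le> 2 * norm (g w - a) ^ 2 + 2 * norm a ^ 2"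
      by (smt (verit) sum_squares_bound power2_sum)
    finally show ?thesis .
  qed
  have "(\<integral>\<^sup>+ w. ennreal (norm (g w) ^ 2) \<partial>M)
      \<le> (\<integral>\<^sup>+ w. (2 * ennreal (norm (g w - a) ^ 2) + ennreal (2 * norm a ^ 2)) \<partial>M)"
    apply (rule nn_integral_mono)
    apply (subst ennr_aux, simp, simp)
    apply (rule ennreal_leI)
    using pw by simp
  also have "\<dots> = 2 * (\<integral>\<^sup>+ w. ennreal (norm (g w - a) ^ 2) \<partial>M) + ennreal (2 * norm a ^ 2)"
  proof -
    have m: "(\<lambda>w. ennreal ((norm (g w - a))\<^sup>2)) \<in> borel_measurable M"
      using gm by measurable
    show ?thesis using M m
      by (subst nn_integral_add) (auto simp: nn_integral_cmult prob_space.emeasure_space_1)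
  qed
  also have "\<dots> \<le> 2 * ennreal s + ennreal (2 * norm a ^ 2)"
    using bv by (intro add_mono mult_left_mono) auto
  also have "\<dots> = ennreal (2 * norm a ^ 2 + 2 * s)"
    using s by (subst ennr_aux) auto
  finally show ?thesis .
qed


lemma gderiv_unique:
  fixes f :: "'a::real_inner \<Rightarrow> real"
  assumes "GDERIV f x :> a" "GDERIV f x :> b" shows "a = b"
proof -
  have "(\<lambda>h. h \<bullet> a) = (\<lambda>h. h \<bullet> b)"
    using has_derivative_unique assms unfolding gderiv_def by blast
  hence "(a - b) \<bullet> a = (a - b) \<bullet> b" by metis
  hence "(a - b) \<bullet> (a - b) = 0" by (simp add: inner_diff_right)
  thus ?thesis by simp
qed

lemma gderiv_avg:
  fixes F :: "nat \<Rightarrow> 'a::real_inner \<Rightarrow> real"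
  assumes "\<forall>i\<in>S. GDERIV (F i) x :> G i"
  shows "GDERIV (\<lambda>x. c * (\<Sum>i\<in>S. F i x)) x :> c *\<^sub>R (\<Sum>i\<in>S. G i)"
  using assms unfolding gderiv_def
  by (auto intro!: derivative_eq_intros simp: inner_sum_right)

lemma part4_real:
  fixes gi :: "nat \<Rightarrow> 'a::real_inner"
  assumes n: "n \<ge> 1" and eta: "\<eta> \<ge> 0"
    and gc: "\<forall>i\<in>{1..n}. \<forall>j\<in>{1..n}. i \<noteq> j \<longrightarrow> gi i \<bullet> gi j \<ge> - \<eta>"
  shows "(\<Sum>i=1..n. norm (gi i)^2) / real n \<le> real n * norm ((1 / real n) *\<^sub>R (\<Sum>i=1..n. gi i))^2 + real n * \<eta>"
proof -
  let ?S = "{1..n}"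
  have row: "(\<Sum>j\<in>?S. gi i \<bullet> gi j) \<ge> norm (gi i)^2 - real n * \<eta>" if i: "i \<in> ?S" for i
  proof -
    have "(\<Sum>j\<in>?S. gi i \<bullet> gi j) = gi i \<bullet> gi i + (\<Sum>j\<in>?S - {i}. gi i \<bullet> gi j)"
      using i by (simp add: sum.remove)
    moreover have "(\<Sum>j\<in>?S - {i}. gi i \<bullet> gi j) \<ge> (\<Sum>j\<in>?S - {i}. - \<eta>)"
      using gc i by (intro sum_mono) auto
    moreover have "(\<Sum>j\<in>?S - {i}. - \<eta>) \<ge> - real n * \<eta>"
      using i eta by (simp add: mult_right_mono)
    moreover have "gi i \<bullet> gi i = norm (gi i)^2" by (simp add: power2_norm_eq_inner)
    ultimately show ?thesis by linarith
  qed
  have "norm (\<Sum>i\<in>?S. gi i)^2 = (\<Sum>i\<in>?S. \<Sum>j\<in>?S. gi i \<bullet> gi j)"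
    by (simp add: power2_norm_eq_inner inner_sum_left inner_sum_right) (rule sum.swap)
  also have "\<dots> \<ge> (\<Sum>i\<in>?S. norm (gi i)^2 - real n * \<eta>)"
    using row by (intro sum_mono) auto
  finally have key: "(\<Sum>i\<in>?S. norm (gi i)^2) - real n * real n * \<eta> \<le> norm (\<Sum>i\<in>?S. gi i)^2"
    by (simp add: sum_subtractf)
  have "real n * norm ((1 / real n) *\<^sub>R (\<Sum>i\<in>?S. gi i))^2 = norm (\<Sum>i\<in>?S. gi i)^2 / real n"
    using n by (simp add: power2_eq_square)
  moreover have "(\<Sum>i\<in>?S. norm (gi i)^2) / real n \<le> (norm (\<Sum>i\<in>?S. gi i)^2 + real n * real n * \<eta>) / real n"
    using key by (intro divide_right_mono) auto
  moreover have "(norm (\<Sum>i\<in>?S. gi i)^2 + real n * real n * \<eta>) / real n = norm (\<Sum>i\<in>?S. gi i)^2 / real n + real n * \<eta>"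
    using n by (simp add: add_divide_distrib)
  ultimately show ?thesis by simp
qed


theorem theorem1:
  fixes f :: "real ^ 'n \<Rightarrow> real"
    and gradf :: "real ^ 'n \<Rightarrow> real ^ 'n"
    and L :: real
    and M :: "'w measure"
    and g :: "real ^ 'n \<Rightarrow> 'w \<Rightarrow> real ^ 'n"
  assumes grad: "\<forall>x. GDERIV f x :> gradf x"
    and bdd: "bdd_below (range f)"
    and lip: "\<forall>x y. norm (gradf x - gradf y) \<le> L * norm (x - y)"
    and M: "prob_space M"
    and unbiased: "\<forall>x. integrable M (g x) \<and> (\<integral>w. g x w \<partial>M) = gradf x"
  shows
   \<comment> \<open>(1) M-SG implies E-SG\<close>
   "((\<exists>\<alpha>\<ge>0. \<forall>x. AE w in M. norm (g x w) ^ 2 \<le> \<alpha> * norm (gradf x) ^ 2)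
       \<longrightarrow> (\<exists>\<alpha>\<ge>0. \<forall>x. (\<integral>\<^sup>+ w. ennreal (norm (g x w) ^ 2) \<partial>M)
                              \<le> ennreal (\<alpha> * norm (gradf x) ^ 2)))
    \<and>
   \<comment> \<open>(2) E-SG implies RG\<close>
    ((\<exists>\<alpha>. \<forall>x. (\<integral>\<^sup>+ w. ennreal (norm (g x w) ^ 2) \<partial>M) \<le> ennreal (\<alpha> * norm (gradf x) ^ 2))
       \<longrightarrow> (\<exists>\<alpha>\<ge>0. \<exists>\<beta>\<ge>0. \<forall>x. (\<integral>\<^sup>+ w. ennreal (norm (g x w) ^ 2) \<partial>M)
                              \<le> ennreal (\<alpha> * norm (gradf x) ^ 2 + \<beta>)))
    \<and>
   \<comment> \<open>(3) BV implies RG\<close>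
    ((\<exists>\<sigma>\<ge>0. \<forall>x. (\<integral>\<^sup>+ w. ennreal (norm (g x w - gradf x) ^ 2) \<partial>M) \<le> ennreal (\<sigma> ^ 2))
       \<longrightarrow> (\<exists>\<alpha>\<ge>0. \<exists>\<beta>\<ge>0. \<forall>x. (\<integral>\<^sup>+ w. ennreal (norm (g x w) ^ 2) \<partial>M)
                              \<le> ennreal (\<alpha> * norm (gradf x) ^ 2 + \<beta>)))
    \<and>
   \<comment> \<open>(4) finite sum with uniform sampling and GC implies RG\<close>
    (\<forall>(n::nat) (fi :: nat \<Rightarrow> real ^ 'n \<Rightarrow> real) (gi :: nat \<Rightarrow> real ^ 'n \<Rightarrow> real ^ 'n) (\<eta>::real).
       n \<ge> 1
       \<longrightarrow> (\<forall>x. f x = (1 / real n) * (\<Sum>i=1..n. fi i x))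
       \<longrightarrow> (\<forall>i\<in>{1..n}. \<forall>x. GDERIV (fi i) x :> gi i x)
       \<longrightarrow> \<eta> > 0
       \<longrightarrow> (\<forall>i\<in>{1..n}. \<forall>j\<in>{1..n}. i \<noteq> j \<longrightarrow> (\<forall>x. gi i x \<bullet> gi j x \<ge> - \<eta>))
       \<longrightarrow> (\<exists>\<alpha>\<ge>0. \<exists>\<beta>\<ge>0. \<forall>x.
              (\<integral>\<^sup>+ i. ennreal (norm (gi i x) ^ 2) \<partial>(measure_pmf (pmf_of_set {1..n})))
                \<le> ennreal (\<alpha> * norm (gradf x) ^ 2 + \<beta>)))
    \<and>
   \<comment> \<open>(5) RG implies ES\<close>
    ((\<exists>\<alpha>\<ge>0. \<exists>\<beta>\<ge>0. \<forall>x. (\<integral>\<^sup>+ w. ennreal (norm (g x w) ^ 2) \<partial>M)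
                              \<le> ennreal (\<alpha> * norm (gradf x) ^ 2 + \<beta>))
       \<longrightarrow> (\<exists>A\<ge>0. \<exists>B\<ge>0. \<exists>C\<ge>0. \<forall>x. (\<integral>\<^sup>+ w. ennreal (norm (g x w) ^ 2) \<partial>M)
              \<le> ennreal (2 * A * (f x - (INF y. f y)) + B * norm (gradf x) ^ 2 + C)))
    \<and>
   \<comment> \<open>(6) expectation of a.s. smooth nonnegative functions (SS) implies ES\<close>
    (\<forall>(D :: 'c measure) (fxi :: 'c \<Rightarrow> real ^ 'n \<Rightarrow> real) (gxi :: 'c \<Rightarrow> real ^ 'n \<Rightarrow> real ^ 'n).
       prob_space D
       \<longrightarrow> (\<forall>\<xi> x. GDERIV (fxi \<xi>) x :> gxi \<xi> x)
       \<longrightarrow> (\<forall>x. integrable D (\<lambda>\<xi>. fxi \<xi> x) \<and> f x = (\<integral>\<xi>. fxi \<xi> x \<partial>D))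
       \<longrightarrow> (\<forall>x. integrable D (\<lambda>\<xi>. gxi \<xi> x) \<and> (\<integral>\<xi>. gxi \<xi> x \<partial>D) = gradf x)
       \<longrightarrow> (AE \<xi> in D. \<forall>x y. norm (gxi \<xi> x - gxi \<xi> y) \<le> L * norm (x - y) \<and> fxi \<xi> x \<ge> 0)
       \<longrightarrow> (\<exists>A\<ge>0. \<exists>B\<ge>0. \<exists>C\<ge>0. \<forall>x. (\<integral>\<^sup>+ \<xi>. ennreal (norm (gxi \<xi> x) ^ 2) \<partial>D)
              \<le> ennreal (2 * A * (f x - (INF y. f y)) + B * norm (gradf x) ^ 2 + C)))"
  proof (intro conjI impI allI)
  have Mp: "prob_space M" by (rule M)
  assume "\<exists>\<alpha>\<ge>0. \<forall>x. AE w in M. norm (g x w) ^ 2 \<le> \<alpha> * norm (gradf x) ^ 2"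
  then obtain a where a: "a \<ge> 0" "\<forall>x. AE w in M. norm (g x w) ^ 2 \<le> a * norm (gradf x) ^ 2" by blast
  show "\<exists>\<alpha>\<ge>0. \<forall>x. (\<integral>\<^sup>+ w. ennreal (norm (g x w) ^ 2) \<partial>M) \<le> ennreal (\<alpha> * norm (gradf x) ^ 2)"
    using a part1[OF Mp] by (intro exI[of _ a]) auto
next
  assume "\<exists>\<alpha>. \<forall>x. (\<integral>\<^sup>+ w. ennreal (norm (g x w) ^ 2) \<partial>M) \<le> ennreal (\<alpha> * norm (gradf x) ^ 2)"
  then obtain a where a: "\<forall>x. (\<integral>\<^sup>+ w. ennreal (norm (g x w) ^ 2) \<partial>M) \<le> ennreal (a * norm (gradf x) ^ 2)" by blast
  have "(\<integral>\<^sup>+ w. ennreal (norm (g x w) ^ 2) \<partial>M) \<le> ennreal (max a 0 * norm (gradf x) ^ 2 + 0)" for x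
  proof -
    have "a * norm (gradf x) ^ 2 \<le> max a 0 * norm (gradf x) ^ 2" by (intro mult_right_mono) auto
    then show ?thesis using a[rule_format, of x] by (simp add: order_trans ennreal_leI)
  qed
  then show "\<exists>\<alpha>\<ge>0. \<exists>\<beta>\<ge>0. \<forall>x. (\<integral>\<^sup>+ w. ennreal (norm (g x w) ^ 2) \<partial>M) \<le> ennreal (\<alpha> * norm (gradf x) ^ 2 + \<beta>)"
    by (intro exI[of _ "max a 0"] exI[of _ 0]) auto
next
  assume "\<exists>\<sigma>\<ge>0. \<forall>x. (\<integral>\<^sup>+ w. ennreal (norm (g x w - gradf x) ^ 2) \<partial>M) \<le> ennreal (\<sigma> ^ 2)"
  then obtain s where s: "\<forall>x. (\<integral>\<^sup>+ w. ennreal (norm (g x w - gradf x) ^ 2) \<partial>M) \<le> ennreal (s ^ 2)" by blast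
  have rg: "(\<integral>\<^sup>+ w. ennreal (norm (g x w) ^ 2) \<partial>M) \<le> ennreal (2 * norm (gradf x) ^ 2 + 2 * s^2)" for x
    using unbiased M s by (intro part3) (auto intro: borel_measurable_integrable)
  then show "\<exists>\<alpha>\<ge>0. \<exists>\<beta>\<ge>0. \<forall>x. (\<integral>\<^sup>+ w. ennreal (norm (g x w) ^ 2) \<partial>M) \<le> ennreal (\<alpha> * norm (gradf x) ^ 2 + \<beta>)"
  proof (intro exI conjI)
    show "(2::real) \<ge> 0" "(2 * s^2::real) \<ge> 0" by auto
    show "\<forall>x. (\<integral>\<^sup>+ w. ennreal (norm (g x w) ^ 2) \<partial>M) \<le> ennreal (2 * norm (gradf x) ^ 2 + 2 * s^2)"
      using rg by blast
  qed
next
  fix n :: nat and fi :: "nat \<Rightarrow> real ^ 'n \<Rightarrow> real" and gi :: "nat \<Rightarrow> real ^ 'n \<Rightarrow> real ^ 'n" and \<eta> :: real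
  assume n: "n \<ge> 1" and fdef: "\<forall>x. f x = (1 / real n) * (\<Sum>i=1..n. fi i x)"
    and gd: "\<forall>i\<in>{1..n}. \<forall>x. GDERIV (fi i) x :> gi i x" and eta: "\<eta> > 0"
    and gc: "\<forall>i\<in>{1..n}. \<forall>j\<in>{1..n}. i \<noteq> j \<longrightarrow> (\<forall>x. gi i x \<bullet> gi j x \<ge> - \<eta>)"
  have rg: "(\<integral>\<^sup>+ i. ennreal (norm (gi i x) ^ 2) \<partial>(measure_pmf (pmf_of_set {1..n})))
          \<le> ennreal (real n * norm (gradf x) ^ 2 + real n * \<eta>)" for x
  proof -
    have fe: "f = (\<lambda>x. (1 / real n) * (\<Sum>i=1..n. fi i x))" using fdef by auto
    have "GDERIV f x :> (1 / real n) *\<^sub>R (\<Sum>i=1..n. gi i x)"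
      unfolding fe using gd by (intro gderiv_avg) auto
    hence gx: "gradf x = (1 / real n) *\<^sub>R (\<Sum>i=1..n. gi i x)"
      using grad gderiv_unique by blast
    have ne: "{1..n} \<noteq> {}" using n by auto
    have "(\<integral>\<^sup>+ i. ennreal (norm (gi i x) ^ 2) \<partial>(measure_pmf (pmf_of_set {1..n})))
        = (\<Sum>i=1..n. ennreal (norm (gi i x) ^ 2)) / ennreal (real n)"
      using ne by (subst nn_integral_pmf_of_set) (auto simp: ennreal_of_nat_eq_real_of_nat)
    also have "\<dots> = ennreal ((\<Sum>i=1..n. norm (gi i x) ^ 2) / real n)"
      using n by (simp add: sum_ennreal) (rule divide_ennreal, auto intro: sum_nonneg)
    also have "\<dots> \<le> ennreal (real n * norm (gradf x) ^ 2 + real n * \<eta>)"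
      unfolding gx using n eta gc
      by (intro ennreal_leI part4_real) auto
    finally show ?thesis .
  qed
  then show "\<exists>\<alpha>\<ge>0. \<exists>\<beta>\<ge>0. \<forall>x.
              (\<integral>\<^sup>+ i. ennreal (norm (gi i x) ^ 2) \<partial>(measure_pmf (pmf_of_set {1..n})))
                \<le> ennreal (\<alpha> * norm (gradf x) ^ 2 + \<beta>)"
  proof (intro exI conjI)
    show "real n \<ge> 0" "real n * \<eta> \<ge> 0" using eta by auto
    show "\<forall>x. (\<integral>\<^sup>+ i. ennreal (norm (gi i x) ^ 2) \<partial>(measure_pmf (pmf_of_set {1..n})))
          \<le> ennreal (real n * norm (gradf x) ^ 2 + real n * \<eta>)" using rg by blast
  qed
next
  assume "\<exists>\<alpha>\<ge>0. \<exists>\<beta>\<ge>0. \<forall>x. (\<integral>\<^sup>+ w. ennreal (norm (g x w) ^ 2) \<partial>M) \<le> ennreal (\<alpha> * norm (gradf x) ^ 2 + \<beta>)"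
  then obtain a b where ab: "a \<ge> 0" "b \<ge> 0" "\<forall>x. (\<integral>\<^sup>+ w. ennreal (norm (g x w) ^ 2) \<partial>M) \<le> ennreal (a * norm (gradf x) ^ 2 + b)" by blast
  then show "\<exists>A\<ge>0. \<exists>B\<ge>0. \<exists>C\<ge>0. \<forall>x. (\<integral>\<^sup>+ w. ennreal (norm (g x w) ^ 2) \<partial>M)
              \<le> ennreal (2 * A * (f x - (INF y. f y)) + B * norm (gradf x) ^ 2 + C)"
  proof (intro exI conjI)
    show "(0::real) \<ge> 0" by simp
    show "\<forall>x. (\<integral>\<^sup>+ w. ennreal (norm (g x w) ^ 2) \<partial>M)
              \<le> ennreal (2 * 0 * (f x - (INF y. f y)) + a * norm (gradf x) ^ 2 + b)" using ab by simp
  qed (use ab in auto)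
next
  fix D :: "'c measure" and fxi :: "'c \<Rightarrow> real ^ 'n \<Rightarrow> real" and gxi :: "'c \<Rightarrow> real ^ 'n \<Rightarrow> real ^ 'n"
  assume D: "prob_space D" and gd: "\<forall>\<xi> x. GDERIV (fxi \<xi>) x :> gxi \<xi> x"
    and fD: "\<forall>x. integrable D (\<lambda>\<xi>. fxi \<xi> x) \<and> f x = (\<integral>\<xi>. fxi \<xi> x \<partial>D)"
    and ss: "AE \<xi> in D. \<forall>x y. norm (gxi \<xi> x - gxi \<xi> y) \<le> L * norm (x - y) \<and> fxi \<xi> x \<ge> 0"
  define K where "K = max L 0 + 1"
  have K: "K > 0" unfolding K_def by auto
  have fnn: "f x \<ge> 0" for x
    using fD ss by (auto intro!: integral_nonneg_AE elim!: AE_mp)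
  have inf: "(INF y. f y) \<ge> 0" using fnn by (intro cINF_greatest) auto
  have rg: "(\<integral>\<^sup>+ \<xi>. ennreal (norm (gxi \<xi> x) ^ 2) \<partial>D)
          \<le> ennreal (2 * K * (f x - (INF y. f y)) + 0 * norm (gradf x) ^ 2 + 2 * K * (INF y. f y))" for x
  proof -
    have "AE \<xi> in D. norm (gxi \<xi> x) ^ 2 \<le> 2 * K * fxi \<xi> x"
      using ss
    proof (rule AE_mp, intro AE_I2 impI)
      fix \<xi> assume h: "\<forall>x y. norm (gxi \<xi> x - gxi \<xi> y) \<le> L * norm (x - y) \<and> fxi \<xi> x \<ge> 0"
      have lp: "norm (gxi \<xi> u - gxi \<xi> v) \<le> K * norm (u - v)" for u v
      proof -
        have "norm (gxi \<xi> u - gxi \<xi> v) \<le> L * norm (u - v)" using h by blast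
        also have "\<dots> \<le> K * norm (u - v)" unfolding K_def by (intro mult_right_mono) auto
        finally show ?thesis .
      qed
      show "norm (gxi \<xi> x) ^ 2 \<le> 2 * K * fxi \<xi> x"
        using grad_bound[of "fxi \<xi>" "gxi \<xi>" K x] gd lp h K by blast
    qed
    hence "(\<integral>\<^sup>+ \<xi>. ennreal (norm (gxi \<xi> x) ^ 2) \<partial>D) \<le> (\<integral>\<^sup>+ \<xi>. ennreal (2 * K * fxi \<xi> x) \<partial>D)"
      by (intro nn_integral_mono_AE) (auto elim!: AE_mp intro: ennreal_leI)
    also have "\<dots> = ennreal (\<integral>\<xi>. 2 * K * fxi \<xi> x \<partial>D)"
      using fD ss K by (intro nn_integral_eq_integral) (auto elim!: AE_mp)
    also have "\<dots> = ennreal (2 * K * f x)" using fD by simp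
    also have "\<dots> = ennreal (2 * K * (f x - (INF y. f y)) + 0 * norm (gradf x) ^ 2 + 2 * K * (INF y. f y))"
      by (simp add: algebra_simps)
    finally show ?thesis .
  qed
  then show "\<exists>A\<ge>0. \<exists>B\<ge>0. \<exists>C\<ge>0. \<forall>x. (\<integral>\<^sup>+ \<xi>. ennreal (norm (gxi \<xi> x) ^ 2) \<partial>D)
              \<le> ennreal (2 * A * (f x - (INF y. f y)) + B * norm (gradf x) ^ 2 + C)"
  proof (intro exI conjI)
    show "K \<ge> 0" "(0::real) \<ge> 0" "2 * K * (INF y. f y) \<ge> 0" using K inf by auto
  qed (use rg in blast)
qed

end
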